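(* Let $\mathcal{A}=\{A_1,\dots,A_m\}\subseteq\mathbb{R}^{n\times n}$, let $r\ge1$ be an integer, and let $J\subseteq[n]$ be such that for every $i\in[m]$ and every $j\in J$ the $j$-th column of $A_i$ is zero. Define $\mathscr{A}^{(0)}=\{2r\,\mathbf{e}_j: j\in[n]\}$ and, for $s\ge1$, $\mathscr{A}^{(s)}=\mathscr{A}^{(s-1)}\cup\bigcup_{i=1}^m\operatorname{supp}(p_{s-1}(A_i\mathbf{x}))$, where $p_{s-1}(\mathbf{x})=\sum_{\alpha\in\mathscr{A}^{(s-1)}}c_\alpha\mathbf{x}^\alpha$ with coefficients $c_\alpha\in(0,1)$ chosen arbitrarily at each step. Then $\mathscr{A}^{(s)}\subseteq\tilde{\mathbb{N}}^{n-|J|}_{2r}\cup\{\mathbf{b}_j\}_{j\in J}$ for all $s\ge1$.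
   Context: $\mathbf{e}_j$ is the $j$-th unit vector of $\mathbb{N}^n$ and $\mathbf{b}_j=2r\,\mathbf{e}_j$. $\tilde{\mathbb{N}}^{n-|J|}_{2r}=\{\alpha\in\mathbb{N}^n:\sum_i\alpha_i\le 2r,\ \alpha_i=0\text{ for }i\in J\}$. $p(A_i\mathbf{x})$ denotes the polynomial $\mathbf{x}\mapsto p(A_i\mathbf{x})$, and $\operatorname{supp}$ the set of exponents of its monomials with nonzero coefficients. *)

theory Defs
  imports Complex_Main "HOL-Library.Poly_Mapping"
begin

(* Multivariate real polynomials in variables x_0, x_1, ... are represented as
  finitely supported maps from exponent vectors (nat 0 nat) to real coefficients;
  Poly_Mapping provides the (convolution) ring structure. The support of a polynomial p
  is Poly_Mapping.keys p. Indices are 0-based: [n] is rendered as {..<n}. *)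

type_synonym rpoly = "(nat \<Rightarrow>\<^sub>0 nat) \<Rightarrow>\<^sub>0 real"

definition Xvar :: "nat \<Rightarrow> rpoly" where
  "Xvar l = Poly_Mapping.single (Poly_Mapping.single l 1) 1"

definition constp :: "real \<Rightarrow> rpoly" where
  "constp c = Poly_Mapping.single 0 c"

(* The polynomial x  p(M x) for an nn matrix M (entries M k l, k,l < n). *)
definition lin_form :: "(nat \<Rightarrow> nat \<Rightarrow> real) \<Rightarrow> nat \<Rightarrow> nat \<Rightarrow> rpoly" where
  "lin_form M n k = (\<Sum>l<n. constp (M k l) * Xvar l)"

definition subst_monom :: "(nat \<Rightarrow> nat \<Rightarrow> real) \<Rightarrow> nat \<Rightarrow> (nat \<Rightarrow>\<^sub>0 nat) \<Rightarrow> rpoly" where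
  "subst_monom M n a = (\<Prod>k\<in>Poly_Mapping.keys a. lin_form M n k ^ Poly_Mapping.lookup a k)"

definition lin_subst :: "(nat \<Rightarrow> nat \<Rightarrow> real) \<Rightarrow> nat \<Rightarrow> rpoly \<Rightarrow> rpoly" where
  "lin_subst M n p = (\<Sum>a\<in>Poly_Mapping.keys p. constp (Poly_Mapping.lookup p a) * subst_monom M n a)"

definition poly_of_coeffs :: "(nat \<Rightarrow>\<^sub>0 nat) set \<Rightarrow> ((nat \<Rightarrow>\<^sub>0 nat) \<Rightarrow> real) \<Rightarrow> rpoly" where
  "poly_of_coeffs S c = (\<Sum>\<alpha>\<in>S. Poly_Mapping.single \<alpha> (c \<alpha>))"

(* The sets ^(s): A i is the matrix A_{i+1} (i < m), c s are the coefficients of p_s. *)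
primrec Aset :: "(nat \<Rightarrow> nat \<Rightarrow> nat \<Rightarrow> real) \<Rightarrow> nat \<Rightarrow> nat \<Rightarrow> nat
    \<Rightarrow> (nat \<Rightarrow> (nat \<Rightarrow>\<^sub>0 nat) \<Rightarrow> real) \<Rightarrow> nat \<Rightarrow> (nat \<Rightarrow>\<^sub>0 nat) set" where
  "Aset A m n r c 0 = {Poly_Mapping.single j (2 * r) | j. j < n}"
| "Aset A m n r c (Suc s) =
     Aset A m n r c s \<union>
     (\<Union>i<m. Poly_Mapping.keys (lin_subst (A i) n (poly_of_coeffs (Aset A m n r c s) (c s))))"

definition tildeN :: "nat \<Rightarrow> nat set \<Rightarrow> nat \<Rightarrow> (nat \<Rightarrow>\<^sub>0 nat) set" where
  "tildeN n J d = {\<alpha>. Poly_Mapping.keys \<alpha> \<subseteq> {..<n} \<and> (\<Sum>k\<in>Poly_Mapping.keys \<alpha>. Poly_Mapping.lookup \<alpha> k) \<le> d \<and> (\<forall>i\<in>J. Poly_Mapping.lookup \<alpha> i = 0)}"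

end

theory Submission
  imports Defs
begin

definition dg :: "nat set \<Rightarrow> (nat \<Rightarrow>\<^sub>0 nat) \<Rightarrow> nat" where
  "dg V a = (\<Sum>k\<in>V. Poly_Mapping.lookup a k)"

definition good :: "nat set \<Rightarrow> nat \<Rightarrow> rpoly \<Rightarrow> bool" where
  "good V D p = (\<forall>\<alpha>\<in>Poly_Mapping.keys p. Poly_Mapping.keys \<alpha> \<subseteq> V \<and> dg V \<alpha> = D)"

definition goodle :: "nat set \<Rightarrow> nat \<Rightarrow> rpoly \<Rightarrow> bool" where
  "goodle V D p = (\<forall>\<alpha>\<in>Poly_Mapping.keys p. Poly_Mapping.keys \<alpha> \<subseteq> V \<and> dg V \<alpha> \<le> D)"

lemma good_zero: "good V D 0" by (simp add: good_def)

lemma good_add: "good V D p \<Longrightarrow> good V D q \<Longrightarrow> good V D (p + q)"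
  unfolding good_def by (meson Un_iff keys_add subsetD)

lemma goodle_add: "goodle V D p \<Longrightarrow> goodle V D q \<Longrightarrow> goodle V D (p + q)"
  unfolding goodle_def by (meson Un_iff keys_add subsetD)

lemma goodle_zero: "goodle V D 0" by (simp add: goodle_def)

lemma good_one: "good V 0 1" by (simp add: good_def dg_def)

lemma dg_add: "dg V (a + b) = dg V a + dg V b"
  by (simp add: dg_def lookup_add sum.distrib)

lemma good_mult: "good V D p \<Longrightarrow> good V E q \<Longrightarrow> good V (D + E) (p * q)"
proof -
  assume p: "good V D p" and q: "good V E q"
  show ?thesis unfolding good_def
  proof
    fix \<gamma> assume "\<gamma> \<in> Poly_Mapping.keys (p * q)"
    then obtain a b where ab: "\<gamma> = a + b" "a \<in> Poly_Mapping.keys p" "b \<in> Poly_Mapping.keys q"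
      using keys_mult by blast
    have a: "Poly_Mapping.keys a \<subseteq> V" "dg V a = D" using p ab(2) unfolding good_def by auto
    have b: "Poly_Mapping.keys b \<subseteq> V" "dg V b = E" using q ab(3) unfolding good_def by auto
    have "Poly_Mapping.keys \<gamma> \<subseteq> V" using a(1) b(1) keys_add[of a b] ab(1) by blast
    then show "Poly_Mapping.keys \<gamma> \<subseteq> V \<and> dg V \<gamma> = D + E"
      using a b ab(1) by (simp add: dg_add)
  qed
qed

lemma good_power: "good V D p \<Longrightarrow> good V (k * D) (p ^ k)"
  by (induction k) (auto simp: good_one good_mult)

lemma good_sum: "(\<And>x. x \<in> S \<Longrightarrow> good V D (f x)) \<Longrightarrow> good V D (\<Sum>x\<in>S. f x)"
  by (induction S rule: infinite_finite_induct) (auto simp: good_zero good_add)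

lemma goodle_sum: "(\<And>x. x \<in> S \<Longrightarrow> goodle V D (f x)) \<Longrightarrow> goodle V D (\<Sum>x\<in>S. f x)"
  by (induction S rule: infinite_finite_induct) (auto simp: goodle_zero goodle_add)

lemma good_prod: "(\<And>x. x \<in> S \<Longrightarrow> good V (g x) (f x)) \<Longrightarrow> good V (\<Sum>x\<in>S. g x) (\<Prod>x\<in>S. f x)"
  by (induction S rule: infinite_finite_induct) (auto simp: good_one good_mult)

lemma constp_Xvar: "constp c * Xvar l = Poly_Mapping.single (Poly_Mapping.single l 1) c"
  by (simp add: constp_def Xvar_def mult_single)

lemma good_lin_form:
  assumes "finite V" "\<And>l. l < n \<Longrightarrow> l \<notin> V \<Longrightarrow> M k l = 0"
  shows "good V 1 (lin_form M n k)"
  unfolding lin_form_def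
proof (rule good_sum)
  fix l assume "l \<in> {..<n}"
  show "good V 1 (constp (M k l) * Xvar l)"
  proof (cases "M k l = 0")
    case True then show ?thesis by (simp add: constp_Xvar good_def)
  next
    case False
    then have "l \<in> V" using assms \<open>l \<in> {..<n}\<close> by auto
    then show ?thesis using False assms(1)
      by (simp add: constp_Xvar good_def dg_def lookup_single when_def)
  qed
qed

lemma good_subst_monom:
  assumes "finite V" "\<And>k l. k < n \<Longrightarrow> l < n \<Longrightarrow> l \<notin> V \<Longrightarrow> M k l = 0"
    "Poly_Mapping.keys a \<subseteq> {..<n}"
  shows "good V (\<Sum>k\<in>Poly_Mapping.keys a. Poly_Mapping.lookup a k) (subst_monom M n a)"
  unfolding subst_monom_def
proof (rule good_prod)
  fix k assume k: "k \<in> Poly_Mapping.keys a"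
  have "good V 1 (lin_form M n k)"
    using assms k by (intro good_lin_form) auto
  from good_power[OF this] show "good V (Poly_Mapping.lookup a k) (lin_form M n k ^ Poly_Mapping.lookup a k)"
    by simp
qed

lemma good_goodle: "good V D p \<Longrightarrow> D \<le> E \<Longrightarrow> goodle V E p"
  unfolding good_def goodle_def by auto

lemma goodle_constp_mult: "goodle V E p \<Longrightarrow> goodle V E (constp c * p)"
proof -
  assume p: "goodle V E p"
  have "good V 0 (constp c)" by (simp add: constp_def good_def dg_def)
  then have "\<And>\<gamma>. \<gamma> \<in> Poly_Mapping.keys (constp c * p) \<Longrightarrow> \<gamma> \<in> Poly_Mapping.keys p"
    using keys_mult[of "constp c" p] by (auto simp: constp_def split: if_splits)
  then show ?thesis using p unfolding goodle_def by blast
qed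

lemma keys_poly_of_coeffs: "Poly_Mapping.keys (poly_of_coeffs S c) \<subseteq> S"
  unfolding poly_of_coeffs_def
  by (induction S rule: infinite_finite_induct) (use keys_add in auto, fastforce split: if_splits)

lemma goodle_lin_subst:
  assumes "finite V" "\<And>k l. k < n \<Longrightarrow> l < n \<Longrightarrow> l \<notin> V \<Longrightarrow> M k l = 0"
    "\<And>a. a \<in> Poly_Mapping.keys p \<Longrightarrow> Poly_Mapping.keys a \<subseteq> {..<n} \<and>
        (\<Sum>k\<in>Poly_Mapping.keys a. Poly_Mapping.lookup a k) \<le> E"
  shows "goodle V E (lin_subst M n p)"
  unfolding lin_subst_def
proof (rule goodle_sum)
  fix a assume a: "a \<in> Poly_Mapping.keys p"
  show "goodle V E (constp (Poly_Mapping.lookup p a) * subst_monom M n a)"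
    using good_subst_monom[OF assms(1,2)] assms(3)[OF a]
    by (intro goodle_constp_mult good_goodle) auto
qed

theorem proposition11p1:
  fixes A :: "nat \<Rightarrow> nat \<Rightarrow> nat \<Rightarrow> real" and m n r :: nat and J :: "nat set"
    and c :: "nat \<Rightarrow> (nat \<Rightarrow>\<^sub>0 nat) \<Rightarrow> real"
  assumes "r \<ge> 1"
    and "J \<subseteq> {..<n}"
    and "\<forall>i<m. \<forall>j\<in>J. \<forall>k<n. A i k j = 0"
    and "\<forall>s. \<forall>\<alpha>\<in>Aset A m n r c s. 0 < c s \<alpha> \<and> c s \<alpha> < 1"
  shows "\<forall>s\<ge>1. Aset A m n r c s \<subseteq>
           tildeN n J (2 * r) \<union> {Poly_Mapping.single j (2 * r) | j. j \<in> J}"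
proof -
  let ?T = "tildeN n J (2 * r) \<union> {Poly_Mapping.single j (2 * r) | j. j \<in> J}"
  let ?V = "{..<n} - J"
  have T1: "Poly_Mapping.keys a \<subseteq> {..<n} \<and> (\<Sum>k\<in>Poly_Mapping.keys a. Poly_Mapping.lookup a k) \<le> 2 * r"
    if "a \<in> ?T" for a
    using that assms(1,2) by (auto simp: tildeN_def)
  have T2: "a \<in> ?T" if "goodle ?V (2 * r) p" "a \<in> Poly_Mapping.keys p" for a p
  proof -
    from that have k: "Poly_Mapping.keys a \<subseteq> ?V" and d: "dg ?V a \<le> 2 * r"
      unfolding goodle_def by auto
    have "dg ?V a = (\<Sum>k\<in>Poly_Mapping.keys a. Poly_Mapping.lookup a k)"
      unfolding dg_def using k
      by (intro sum.mono_neutral_right) (auto simp: in_keys_iff)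
    then have "a \<in> tildeN n J (2 * r)" using k d
      by (auto simp: tildeN_def in_keys_iff)
    then show ?thesis by blast
  qed
  have inv: "Aset A m n r c s \<subseteq> ?T" for s
  proof (induction s)
    case 0
    show ?case
    proof
      fix a assume "a \<in> Aset A m n r c 0"
      then obtain j where j: "j < n" "a = Poly_Mapping.single j (2 * r)" by auto
      show "a \<in> ?T"
      proof (cases "j \<in> J")
        case True then show ?thesis using j by blast
      next
        case False
        have "a \<in> tildeN n J (2 * r)" using j False assms(1)
          unfolding tildeN_def by (auto simp: lookup_single when_def)
        then show ?thesis by blast
      qed
    qed
  next
    case (Suc s)
    have "Poly_Mapping.keys (lin_subst (A i) n (poly_of_coeffs (Aset A m n r c s) (c s))) \<subseteq> ?T"
      if i: "i < m" for i
    proof -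
      have "goodle ?V (2 * r) (lin_subst (A i) n (poly_of_coeffs (Aset A m n r c s) (c s)))"
      proof (rule goodle_lin_subst)
        show "finite ?V" by simp
        show "A i k l = 0" if "k < n" "l < n" "l \<notin> ?V" for k l
          using assms(3) i that by auto
        fix a assume "a \<in> Poly_Mapping.keys (poly_of_coeffs (Aset A m n r c s) (c s))"
        then have "a \<in> ?T" using keys_poly_of_coeffs Suc.IH by blast
        then show "Poly_Mapping.keys a \<subseteq> {..<n} \<and>
          (\<Sum>k\<in>Poly_Mapping.keys a. Poly_Mapping.lookup a k) \<le> 2 * r" by (rule T1)
      qed
      then show ?thesis using T2 by blast
    qed
    then show ?case using Suc.IH by auto
  qed
  then show ?thesis by blast
qed

end
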